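(* Every polymatroid game possesses a pure Nash equilibrium. That is: let $N=\{1,\dots,n\}$ be a finite set of players and $E=\{1,\dots,m\}$ a finite set of resources; for each player $i$ let $f_i:2^E\to\mathbb{N}$ be an integral polymatroid rank function and $d_i\in\mathbb{N}$ with $d_i\le f_i(E)$, and let the strategy set of player $i$ be $X_i=\mathbb{B}_{f_i}(d_i)$; for each $i\in N,e\in E$ let $C_{i,e}:\mathbb{N}\times\mathbb{N}\to\mathbb{R}_+$ be regular, and let the private cost of player $i$ in profile $\vec x=(\vec x_j)_{j\in N}\in X_1\times\dots\times X_n$ be $\pi_i(\vec x)=\sum_{e\in E}C_{i,e}(x_{i,e};x_{-i,e})$ with $x_{-i,e}=\sum_{j\neq i}x_{j,e}$. Then there exists a profile $\vec x$ such that for every $i\in N$ and every $\vec y_i\in X_i$, $\pi_i(\vec x)\le\pi_i(\vec y_i,\vec x_{-i})$.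
   Context: $\mathbb{N}=\{0,1,2,\dots\}$. An integral polymatroid rank function is $f:2^E\to\mathbb{N}$ with $f(\emptyset)=0$, monotone ($f(U)\le f(V)$ for $U\subseteq V$) and submodular. $x_i(U)=\sum_{e\in U}x_{i,e}$; $\mathbb{B}_f(d)=\{\vec x\in\mathbb{N}^E: x(U)\le f(U)\ \forall U\subseteq E,\ x(E)=d\}$. For $C:\mathbb{N}\times\mathbb{N}\to\mathbb{R}$, $C^-(x;t)=C(x;t)-C(x-1;t)$ for $x\ge1$; $C$ is regular if $C^-(x;t)\le C^-(x;t+1)$ and $C^-(x;t+1)\le C^-(x+1;t)$ for all $x\ge1$, $t\in\mathbb{N}$. *)

theory Defs
  imports Complex_Main "HOL-Library.FuncSet"
begin

definition polymatroid_rank :: "'e set \<Rightarrow> ('e set \<Rightarrow> nat) \<Rightarrow> bool" where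
  "polymatroid_rank E f \<longleftrightarrow>
     f {} = 0 \<and>
     (\<forall>U V. U \<subseteq> V \<and> V \<subseteq> E \<longrightarrow> f U \<le> f V) \<and>
     (\<forall>U V. U \<subseteq> E \<and> V \<subseteq> E \<longrightarrow> f (U \<union> V) + f (U \<inter> V) \<le> f U + f V)"

definition base_set :: "'e set \<Rightarrow> ('e set \<Rightarrow> nat) \<Rightarrow> nat \<Rightarrow> ('e \<Rightarrow> nat) set" where
  "base_set E f d = {x \<in> E \<rightarrow>\<^sub>E UNIV.
      (\<forall>U. U \<subseteq> E \<longrightarrow> sum x U \<le> f U) \<and> sum x E = d}"

definition marg_cost :: "(nat \<Rightarrow> nat \<Rightarrow> real) \<Rightarrow> nat \<Rightarrow> nat \<Rightarrow> real" where
  "marg_cost C x t = C x t - C (x - 1) t"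

definition regular_cost :: "(nat \<Rightarrow> nat \<Rightarrow> real) \<Rightarrow> bool" where
  "regular_cost C \<longleftrightarrow>
     (\<forall>x t. x \<ge> 1 \<longrightarrow> marg_cost C x t \<le> marg_cost C x (t + 1) \<and>
                        marg_cost C x (t + 1) \<le> marg_cost C (x + 1) t)"

definition private_cost ::
  "nat set \<Rightarrow> 'e set \<Rightarrow> (nat \<Rightarrow> 'e \<Rightarrow> nat \<Rightarrow> nat \<Rightarrow> real) \<Rightarrow> (nat \<Rightarrow> 'e \<Rightarrow> nat) \<Rightarrow> nat \<Rightarrow> real" where
  "private_cost N E C x i = (\<Sum>e\<in>E. C i e (x i e) (\<Sum>j\<in>N - {i}. x j e))"

end

theory Submission
  imports Defs
begin


definition mv :: "('e \<Rightarrow> nat) \<Rightarrow> 'e \<Rightarrow> 'e \<Rightarrow> 'e \<Rightarrow> nat" where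
  "mv z a b = (z(a := z a - 1))(b := z b + 1)"

lemma sum_upd_nat:
  fixes h :: "'e \<Rightarrow> nat"
  assumes "finite U"
  shows "sum (h(a := v)) U + (if a \<in> U then h a else 0) = sum h U + (if a \<in> U then v else 0)"
proof (cases "a \<in> U")
  case True
  have "sum (h(a := v)) U = v + sum (h(a := v)) (U - {a})"
    using sum.remove[OF assms True, of "h(a := v)"] by simp
  also have "sum (h(a := v)) (U - {a}) = sum h (U - {a})" by (rule sum.cong) auto
  finally show ?thesis using sum.remove[OF assms True, of h] True by simp
next
  case False
  then have "sum (h(a := v)) U = sum h U" by (intro sum.cong) auto
  then show ?thesis using False by simp
qed

lemma sum_mv:
  fixes z :: "'e \<Rightarrow> nat"
  assumes "finite U" "a \<noteq> b" "1 \<le> z a"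
  shows "sum (mv z a b) U + (if a \<in> U then 1 else 0) = sum z U + (if b \<in> U then 1 else 0)"
proof -
  have 1: "sum (z(a := z a - 1)) U + (if a \<in> U then z a else 0) = sum z U + (if a \<in> U then z a - 1 else 0)"
    by (rule sum_upd_nat[OF assms(1)])
  have 2: "sum (mv z a b) U + (if b \<in> U then (z(a := z a - 1)) b else 0) =
     sum (z(a := z a - 1)) U + (if b \<in> U then z b + 1 else 0)"
    unfolding mv_def by (rule sum_upd_nat[OF assms(1)])
  show ?thesis using 1 2 assms(2,3) by (auto split: if_splits)
qed

lemma mv_apply: "a \<noteq> b \<Longrightarrow> mv z a b a = z a - 1" "mv z a b b = z b + 1"
  "e \<noteq> a \<Longrightarrow> e \<noteq> b \<Longrightarrow> mv z a b e = z e"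
  by (auto simp: mv_def)

locale poly =
  fixes E :: "'e set" and g :: "'e set \<Rightarrow> nat"
  assumes finE: "finite E" and pr: "polymatroid_rank E g"
begin

lemma g_empty: "g {} = 0" using pr by (simp add: polymatroid_rank_def)
lemma g_mono: "U \<subseteq> V \<Longrightarrow> V \<subseteq> E \<Longrightarrow> g U \<le> g V" using pr by (simp add: polymatroid_rank_def)
lemma g_sub: "U \<subseteq> E \<Longrightarrow> V \<subseteq> E \<Longrightarrow> g (U \<union> V) + g (U \<inter> V) \<le> g U + g V"
  using pr by (simp add: polymatroid_rank_def)

definition inP :: "('e \<Rightarrow> nat) \<Rightarrow> bool" where
  "inP x \<longleftrightarrow> (\<forall>U. U \<subseteq> E \<longrightarrow> sum x U \<le> g U)"

definition tight :: "('e \<Rightarrow> nat) \<Rightarrow> 'e set \<Rightarrow> bool" where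
  "tight x U \<longleftrightarrow> U \<subseteq> E \<and> sum x U = g U"

abbreviation "B \<equiv> base_set E g (g E)"

lemma B_iff: "x \<in> B \<longleftrightarrow> x \<in> E \<rightarrow>\<^sub>E UNIV \<and> inP x \<and> sum x E = g E"
  by (auto simp: base_set_def inP_def)

lemma tight_un_int:
  assumes "inP x" "tight x U" "tight x V"
  shows "tight x (U \<union> V)" "tight x (U \<inter> V)"
proof -
  have fU: "finite U" "finite V" using assms finE unfolding tight_def by (auto intro: finite_subset)
  have s: "sum x (U \<union> V) + sum x (U \<inter> V) = sum x U + sum x V"
    using sum.union_inter[OF fU] by simp
  have "g (U \<union> V) + g (U \<inter> V) \<le> g U + g V" using g_sub assms unfolding tight_def by auto
  moreover have "U \<union> V \<subseteq> E" "U \<inter> V \<subseteq> E" using assms unfolding tight_def by auto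
  moreover have "sum x (U \<union> V) \<le> g (U \<union> V)" "sum x (U \<inter> V) \<le> g (U \<inter> V)"
    using assms(1) calculation(2,3) unfolding inP_def by auto
  ultimately show "tight x (U \<union> V)" "tight x (U \<inter> V)"
    using s assms unfolding tight_def by auto
qed

lemma tight_empty: "tight x {}" by (simp add: tight_def g_empty)

lemma tight_min:
  assumes "inP x" "tight x E" "u \<in> E"
  shows "\<exists>A. tight x A \<and> u \<in> A \<and> (\<forall>U. tight x U \<and> u \<in> U \<longrightarrow> A \<subseteq> U)"
proof -
  obtain A where A: "tight x A \<and> u \<in> A" and m: "\<forall>U. tight x U \<and> u \<in> U \<longrightarrow> card A \<le> card U"
    using ex_has_least_nat[of "\<lambda>U. tight x U \<and> u \<in> U" E card] assms by blast
  have "A \<subseteq> U" if "tight x U" "u \<in> U" for U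
  proof -
    have t: "tight x (A \<inter> U)" using tight_un_int(2)[OF assms(1)] A that by blast
    have "card A \<le> card (A \<inter> U)" using m t A that by blast
    moreover have "finite A" using A finE unfolding tight_def by (auto intro: finite_subset)
    ultimately have "A \<inter> U = A" using card_seteq[of A "A \<inter> U"] by auto
    then show ?thesis by blast
  qed
  then show ?thesis using A by blast
qed

lemma tight_max:
  assumes "inP x"
  shows "\<exists>W. tight x W \<and> u \<notin> W \<and> (\<forall>U. tight x U \<and> u \<notin> U \<longrightarrow> U \<subseteq> W)"
proof -
  obtain W where W: "tight x W \<and> u \<notin> W" and m: "\<forall>U. tight x U \<and> u \<notin> U \<longrightarrow> card E - card W \<le> card E - card U"
    using ex_has_least_nat[of "\<lambda>U. tight x U \<and> u \<notin> U" "{}" "\<lambda>U. card E - card U"] tight_empty by blast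
  have "U \<subseteq> W" if "tight x U" "u \<notin> U" for U
  proof -
    have t: "tight x (W \<union> U)" using tight_un_int(1)[OF assms(1)] W that by blast
    have sub: "W \<union> U \<subseteq> E" using t unfolding tight_def by auto
    have "card E - card W \<le> card E - card (W \<union> U)" using m t W that by blast
    moreover have "card (W \<union> U) \<le> card E" using sub finE card_mono by blast
    moreover have "finite (W \<union> U)" using sub finE by (auto intro: finite_subset)
    ultimately have "card (W \<union> U) \<le> card W" by linarith
    then have "W = W \<union> U" using card_seteq[of "W \<union> U" W] \<open>finite (W \<union> U)\<close> by auto
    then show ?thesis by blast
  qed
  then show ?thesis using W by blast
qed

lemma tight_maxall:
  assumes "inP x"
  shows "\<exists>W. tight x W \<and> (\<forall>U. tight x U \<longrightarrow> U \<subseteq> W)"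
proof -
  obtain W where W: "tight x W" and m: "\<forall>U. tight x U \<longrightarrow> card E - card W \<le> card E - card U"
    using ex_has_least_nat[of "\<lambda>U. tight x U" "{}" "\<lambda>U. card E - card U"] tight_empty by blast
  have "U \<subseteq> W" if "tight x U" for U
  proof -
    have t: "tight x (W \<union> U)" using tight_un_int(1)[OF assms(1)] W that by blast
    have sub: "W \<union> U \<subseteq> E" using t unfolding tight_def by auto
    have "card E - card W \<le> card E - card (W \<union> U)" using m t by blast
    moreover have "card (W \<union> U) \<le> card E" using sub finE card_mono by blast
    moreover have "finite (W \<union> U)" using sub finE by (auto intro: finite_subset)
    ultimately have "card (W \<union> U) \<le> card W" by linarith
    then have "W = W \<union> U" using card_seteq[of "W \<union> U" W] \<open>finite (W \<union> U)\<close> by auto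
    then show ?thesis by blast
  qed
  then show ?thesis using W by blast
qed

lemma tight_exchange:
  assumes x: "x \<in> B" and ab: "a \<in> E" "b \<in> E" "a \<noteq> b" "1 \<le> x b"
    and nt: "\<forall>U. tight x U \<and> a \<in> U \<longrightarrow> b \<in> U"
  shows "mv x b a \<in> B"
proof -
  have xP: "inP x" "sum x E = g E" "x \<in> E \<rightarrow>\<^sub>E UNIV" using x B_iff by auto
  have "sum (mv x b a) U \<le> g U" if U: "U \<subseteq> E" for U
  proof -
    have fU: "finite U" using U finE by (auto intro: finite_subset)
    have s: "sum (mv x b a) U + (if b \<in> U then 1 else 0) = sum x U + (if a \<in> U then 1 else 0)"
      using sum_mv[OF fU, of b a x] ab by auto
    have le: "sum x U \<le> g U" using xP U unfolding inP_def by auto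
    show ?thesis
    proof (cases "a \<in> U \<and> b \<notin> U")
      case True
      then have "\<not> tight x U" using nt by blast
      then have "sum x U < g U" using le U unfolding tight_def by auto
      then show ?thesis using s True by auto
    next
      case False
      then show ?thesis using s le by (auto split: if_splits)
    qed
  qed
  moreover have "sum (mv x b a) E = g E"
    using sum_mv[OF finE, of b a x] ab xP by auto
  moreover have "mv x b a \<in> E \<rightarrow>\<^sub>E UNIV"
    using xP(3) ab unfolding mv_def by (auto simp: PiE_def extensional_def)
  ultimately show ?thesis using B_iff inP_def by auto
qed

lemma exchange:
  assumes y: "y \<in> B" and z: "z \<in> B" and u: "u \<in> E" "z u < y u"
  shows "\<exists>v\<in>E. y v < z v \<and> mv y u v \<in> B \<and> mv z v u \<in> B"
proof -
  have yP: "inP y" "sum y E = g E" using y B_iff by auto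
  have zP: "inP z" "sum z E = g E" using z B_iff by auto
  have tE: "tight z E" using zP by (simp add: tight_def)
  obtain A where A: "tight z A" "u \<in> A" and Amin: "\<forall>U. tight z U \<and> u \<in> U \<longrightarrow> A \<subseteq> U"
    using tight_min[OF zP(1) tE u(1)] by blast
  obtain W where W: "tight y W" "u \<notin> W" and Wmax: "\<forall>U. tight y U \<and> u \<notin> U \<longrightarrow> U \<subseteq> W"
    using tight_max[OF yP(1)] by blast
  have AE: "A \<subseteq> E" and WE: "W \<subseteq> E" using A W by (auto simp: tight_def)
  have fA: "finite A" and fW: "finite W" using AE WE finE by (auto intro: finite_subset)
  have "\<exists>v\<in>A - W. y v < z v"
  proof (rule ccontr)
    assume "\<not> ?thesis"
    then have le: "\<forall>v\<in>A - W. z v \<le> y v" using not_less by blast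
    have lt: "sum z (A - W) < sum y (A - W)"
      by (rule sum_strict_mono_ex1) (use fA le A W u in auto)
    have s1: "g (A \<union> W) + g (A \<inter> W) \<le> g A + g W" using g_sub AE WE by auto
    have s2: "sum y (A \<union> W) \<le> g (A \<union> W)" using yP(1) AE WE unfolding inP_def by auto
    have s3: "sum z (A \<inter> W) \<le> g (A \<inter> W)" using zP(1) AE unfolding inP_def by (meson inf.coboundedI1)
    have s4: "g A = sum z A" "g W = sum y W" using A W by (auto simp: tight_def)
    have s5: "sum y (A \<union> W) = sum y W + sum y (A - W)"
    proof -
      have "A \<union> W = W \<union> (A - W)" by auto
      then show ?thesis using sum.union_disjoint[of W "A - W" y] fA fW by auto
    qed
    have s6: "sum z A = sum z (A \<inter> W) + sum z (A - W)"
      using sum.Int_Diff[OF fA, of z W] by simp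
    show False using s1 s2 s3 s4 s5 s6 lt by linarith
  qed
  then obtain v where v: "v \<in> A" "v \<notin> W" "y v < z v" by blast
  have vE: "v \<in> E" using v AE by auto
  have vu: "v \<noteq> u" using v u by auto
  have "mv z v u \<in> B"
    by (rule tight_exchange[OF z u(1) vE vu[symmetric]]) (use v Amin in auto)
  moreover have "mv y u v \<in> B"
  proof (rule tight_exchange[OF y vE u(1) vu])
    show "1 \<le> y u" using u by auto
    show "\<forall>U. tight y U \<and> v \<in> U \<longrightarrow> u \<in> U" using Wmax v by blast
  qed
  ultimately show ?thesis using v vE by blast
qed

end

definition cst :: "'e set \<Rightarrow> ('e \<Rightarrow> nat \<Rightarrow> nat \<Rightarrow> real) \<Rightarrow> ('e \<Rightarrow> nat) \<Rightarrow> ('e \<Rightarrow> nat) \<Rightarrow> real" where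
  "cst E K \<tau> z = (\<Sum>e\<in>E. K e (z e) (\<tau> e))"

definition mg :: "('e \<Rightarrow> nat \<Rightarrow> nat \<Rightarrow> real) \<Rightarrow> ('e \<Rightarrow> nat) \<Rightarrow> 'e \<Rightarrow> nat \<Rightarrow> real" where
  "mg K \<tau> e k = marg_cost (K e) k (\<tau> e)"

definition isopt :: "'e set \<Rightarrow> ('e \<Rightarrow> nat) set \<Rightarrow> ('e \<Rightarrow> nat \<Rightarrow> nat \<Rightarrow> real) \<Rightarrow> ('e \<Rightarrow> nat) \<Rightarrow> ('e \<Rightarrow> nat) \<Rightarrow> bool" where
  "isopt E Bs K \<tau> z \<longleftrightarrow> z \<in> Bs \<and> (\<forall>y\<in>Bs. cst E K \<tau> z \<le> cst E K \<tau> y)"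

definition islo :: "'e set \<Rightarrow> ('e \<Rightarrow> nat) set \<Rightarrow> ('e \<Rightarrow> nat \<Rightarrow> nat \<Rightarrow> real) \<Rightarrow> ('e \<Rightarrow> nat) \<Rightarrow> ('e \<Rightarrow> nat) \<Rightarrow> bool" where
  "islo E Bs K \<tau> z \<longleftrightarrow> (\<forall>a\<in>E. \<forall>b\<in>E. a \<noteq> b \<longrightarrow> 1 \<le> z a \<longrightarrow> mv z a b \<in> Bs \<longrightarrow>
      mg K \<tau> a (z a) \<le> mg K \<tau> b (z b + 1))"

lemma reg_t: "regular_cost C \<Longrightarrow> 1 \<le> x \<Longrightarrow> marg_cost C x t \<le> marg_cost C x (t + 1)"
  by (simp add: regular_cost_def)
lemma reg_d: "regular_cost C \<Longrightarrow> 1 \<le> x \<Longrightarrow> marg_cost C x (t + 1) \<le> marg_cost C (x + 1) t"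
  by (simp add: regular_cost_def)
lemma reg_x: assumes "regular_cost C" "1 \<le> x" "x \<le> y" shows "marg_cost C x t \<le> marg_cost C y t"
  using assms(3)
proof (induction y rule: dec_induct)
  case base then show ?case by simp
next
  case (step k)
  have "marg_cost C k t \<le> marg_cost C (k + 1) t"
    using reg_t[OF assms(1), of k t] reg_d[OF assms(1), of k t] step.hyps assms(2) by linarith
  then show ?case using step.IH by simp
qed

lemma sum_two:
  fixes h :: "'e \<Rightarrow> real"
  assumes "finite E" "a \<in> E" "b \<in> E" "a \<noteq> b"
  shows "sum h E = h a + h b + sum h (E - {a, b})"
proof -
  have "sum h E = h a + sum h (E - {a})" using sum.remove[OF assms(1,2)] by simp
  moreover have "sum h (E - {a}) = h b + sum h (E - {a} - {b})"
    using sum.remove[of "E - {a}" b h] assms by simp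
  moreover have "E - {a} - {b} = E - {a, b}" by auto
  ultimately show ?thesis by simp
qed

lemma cst_mv:
  assumes "finite E" "a \<in> E" "b \<in> E" "a \<noteq> b" "1 \<le> z a"
  shows "cst E K \<tau> (mv z a b) = cst E K \<tau> z - mg K \<tau> a (z a) + mg K \<tau> b (z b + 1)"
proof -
  have "cst E K \<tau> (mv z a b) = K a (z a - 1) (\<tau> a) + K b (z b + 1) (\<tau> b) + (\<Sum>e\<in>E - {a, b}. K e (mv z a b e) (\<tau> e))"
    unfolding cst_def using sum_two[OF assms(1-4), of "\<lambda>e. K e (mv z a b e) (\<tau> e)"] assms(4)
    by (simp add: mv_apply)
  moreover have "(\<Sum>e\<in>E - {a, b}. K e (mv z a b e) (\<tau> e)) = (\<Sum>e\<in>E - {a, b}. K e (z e) (\<tau> e))"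
    by (rule sum.cong) (auto simp: mv_apply)
  moreover have "cst E K \<tau> z = K a (z a) (\<tau> a) + K b (z b) (\<tau> b) + (\<Sum>e\<in>E - {a, b}. K e (z e) (\<tau> e))"
    unfolding cst_def using sum_two[OF assms(1-4), of "\<lambda>e. K e (z e) (\<tau> e)"] by simp
  ultimately show ?thesis using assms(5) by (simp add: mg_def marg_cost_def)
qed

lemma mg_upd: "mg K (\<tau>(c := t)) e k = (if e = c then marg_cost (K c) k t else mg K \<tau> e k)"
  by (simp add: mg_def)

lemma isopt_islo:
  assumes "finite E" "isopt E Bs K \<tau> z"
  shows "islo E Bs K \<tau> z"
  unfolding islo_def
proof (intro ballI impI)
  fix a b assume ab: "a \<in> E" "b \<in> E" "a \<noteq> b" "1 \<le> z a" "mv z a b \<in> Bs"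
  have "cst E K \<tau> z \<le> cst E K \<tau> (mv z a b)" using assms(2) ab unfolding isopt_def by blast
  then show "mg K \<tau> a (z a) \<le> mg K \<tau> b (z b + 1)" using cst_mv[of E a b z K \<tau>] assms(1) ab by simp
qed

locale pcost = poly E g for E :: "'e set" and g +
  fixes K :: "'e \<Rightarrow> nat \<Rightarrow> nat \<Rightarrow> real"
  assumes reg: "\<And>e. e \<in> E \<Longrightarrow> regular_cost (K e)"
begin

lemma islo_isopt:
  assumes z: "z \<in> B" and lo: "islo E B K \<tau> z"
  shows "isopt E B K \<tau> z"
proof -
  define D where "D y = (\<Sum>e\<in>E. (y e - z e) + (z e - y e))" for y :: "'e \<Rightarrow> nat"
  have "cst E K \<tau> z \<le> cst E K \<tau> y" if "y \<in> B" for y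
    using that
  proof (induction "D y" arbitrary: y rule: less_induct)
    case less
    show ?case
    proof (cases "\<exists>u\<in>E. z u < y u")
      case True
      then obtain u where u: "u \<in> E" "z u < y u" by blast
      obtain v where v: "v \<in> E" "y v < z v" "mv y u v \<in> B" "mv z v u \<in> B"
        using exchange[OF less.prems z u] by blast
      have vu: "v \<noteq> u" using u v by auto
      have "D (mv y u v) < D y"
        unfolding D_def
      proof (rule sum_strict_mono_ex1[OF finE])
        show "\<forall>x\<in>E. mv y u v x - z x + (z x - mv y u v x) \<le> y x - z x + (z x - y x)"
          using u v vu by (auto simp: mv_def)
        show "\<exists>a\<in>E. mv y u v a - z a + (z a - mv y u v a) < y a - z a + (z a - y a)"
          using u v vu by (auto simp: mv_def intro!: bexI[of _ u])
      qed
      then have ih: "cst E K \<tau> z \<le> cst E K \<tau> (mv y u v)" using less.hyps v(3) by blast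
      have c1: "cst E K \<tau> (mv y u v) = cst E K \<tau> y - mg K \<tau> u (y u) + mg K \<tau> v (y v + 1)"
        using cst_mv[of E u v y K \<tau>] finE u v vu by simp
      have m1: "mg K \<tau> v (y v + 1) \<le> mg K \<tau> v (z v)"
        unfolding mg_def using reg_x[OF reg[OF v(1)]] v by simp
      have m2: "mg K \<tau> u (z u + 1) \<le> mg K \<tau> u (y u)"
        unfolding mg_def using reg_x[OF reg[OF u(1)]] u by simp
      have m3: "mg K \<tau> v (z v) \<le> mg K \<tau> u (z u + 1)"
        using lo v u vu unfolding islo_def by auto
      show ?thesis using ih c1 m1 m2 m3 by linarith
    next
      case False
      have ye: "\<forall>e\<in>E. y e = z e"
      proof
        fix e assume e: "e \<in> E"
        have "sum y E = sum z E" using less.prems z B_iff by simp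
        then show "y e = z e" using sum_mono_inv[of y E z e] False e finE by force
      qed
      then show ?thesis unfolding cst_def by (simp cong: sum.cong)
    qed
  qed
  then show ?thesis using z unfolding isopt_def by blast
qed

lemma isopt_iff: "isopt E B K \<tau> z \<longleftrightarrow> z \<in> B \<and> islo E B K \<tau> z"
  using islo_isopt isopt_islo[OF finE] isopt_def by blast

lemma opt_zero:
  assumes o: "isopt E B K \<sigma> z" and c: "c \<in> E" and z0: "z c = 0"
  shows "isopt E B K (\<sigma>(c := \<sigma> c + 1)) z"
proof -
  have z: "z \<in> B" and lo: "islo E B K \<sigma> z" using o isopt_iff by auto
  have "islo E B K (\<sigma>(c := \<sigma> c + 1)) z"
    unfolding islo_def
  proof (intro ballI impI)
    fix a b assume ab: "a \<in> E" "b \<in> E" "a \<noteq> b" "1 \<le> z a" "mv z a b \<in> B"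
    have l: "mg K \<sigma> a (z a) \<le> mg K \<sigma> b (z b + 1)" using lo ab unfolding islo_def by blast
    have ac: "a \<noteq> c" using ab z0 by auto
    show "mg K (\<sigma>(c := \<sigma> c + 1)) a (z a) \<le> mg K (\<sigma>(c := \<sigma> c + 1)) b (z b + 1)"
    proof (cases "b = c")
      case True
      have "mg K \<sigma> b (z b + 1) \<le> marg_cost (K c) (z b + 1) (\<sigma> c + 1)"
        using reg_t[OF reg[OF c], of "z b + 1" "\<sigma> c"] True by (simp add: mg_def)
      then show ?thesis using l ac True by (simp add: mg_upd)
    next
      case False then show ?thesis using l ac by (simp add: mg_upd)
    qed
  qed
  then show ?thesis using z isopt_iff by auto
qed

lemma key:
  assumes oy: "isopt E B K \<sigma> y" and oy': "isopt E B K (\<sigma>(c := \<sigma> c + 1)) (mv y c e')"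
    and ce: "c \<in> E" "e' \<in> E" "c \<noteq> e'" and yc: "1 \<le> y c" and se: "1 \<le> \<sigma> e'"
  shows "isopt E B K ((\<sigma>(c := \<sigma> c + 1))(e' := \<sigma> e' - 1)) (mv y c e')"
proof -
  define \<rho> where "\<rho> = \<sigma>(c := \<sigma> c + 1)"
  define y' where "y' = mv y c e'"
  have y: "y \<in> B" and loy: "islo E B K \<sigma> y" using oy isopt_iff by auto
  have y'B: "y' \<in> B" and loy': "islo E B K \<rho> y'" using oy' isopt_iff unfolding \<rho>_def y'_def by auto
  have y'c: "y' c = y c - 1" and y'e: "y' e' = y e' + 1" and y'o: "\<And>x. x \<noteq> c \<Longrightarrow> x \<noteq> e' \<Longrightarrow> y' x = y x"
    using ce unfolding y'_def by (auto simp: mv_def)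
  have \<rho>e: "\<rho> e' = \<sigma> e'" using ce unfolding \<rho>_def by simp
  have regE: "regular_cost (K e')" "regular_cost (K c)" using reg ce by auto
  have "islo E B K (\<rho>(e' := \<sigma> e' - 1)) y'"
    unfolding islo_def
  proof (intro ballI impI)
    fix a b assume ab: "a \<in> E" "b \<in> E" "a \<noteq> b" "1 \<le> y' a" "mv y' a b \<in> B"
    have l: "mg K \<rho> a (y' a) \<le> mg K \<rho> b (y' b + 1)" using loy' ab unfolding islo_def by blast
    show "mg K (\<rho>(e' := \<sigma> e' - 1)) a (y' a) \<le> mg K (\<rho>(e' := \<sigma> e' - 1)) b (y' b + 1)"
    proof (cases "a = e'")
      case True
      have "marg_cost (K e') (y' e') (\<sigma> e' - 1) \<le> marg_cost (K e') (y' e') (\<sigma> e' - 1 + 1)"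
        using reg_t[OF regE(1), of "y' e'"] y'e by simp
      then have "marg_cost (K e') (y' e') (\<sigma> e' - 1) \<le> mg K \<rho> e' (y' e')"
        using se \<rho>e by (simp add: mg_def)
      then show ?thesis using l True ab by (simp add: mg_upd)
    next
      case ae: False
      show ?thesis
      proof (cases "b = e'")
        case be: True
        have d1: "marg_cost (K e') (y e' + 1) (\<sigma> e') \<le> marg_cost (K e') (y e' + 2) (\<sigma> e' - 1)"
          using reg_d[OF regE(1), of "y e' + 1" "\<sigma> e' - 1"] se by simp
        have "mg K \<rho> a (y' a) \<le> marg_cost (K e') (y e' + 1) (\<sigma> e')"
        proof (cases "a = c")
          case True
          have "mg K \<rho> a (y' a) = marg_cost (K c) (y c - 1) (\<sigma> c + 1)"
            using True y'c unfolding \<rho>_def by (simp add: mg_def)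
          also have "\<dots> \<le> marg_cost (K c) (y c - 1 + 1) (\<sigma> c)"
            using reg_d[OF regE(2), of "y c - 1" "\<sigma> c"] ab True y'c by simp
          also have "\<dots> = mg K \<sigma> c (y c)" using yc by (simp add: mg_def)
          also have "\<dots> \<le> mg K \<sigma> e' (y e' + 1)"
            using loy ce yc y'B unfolding islo_def y'_def by blast
          finally show ?thesis by (simp add: mg_def)
        next
          case False
          have ya: "y' a = y a" using y'o False ae by auto
          have w: "mv y' a e' \<in> B" using ab be by simp
          obtain v where v: "v \<in> E" "mv y' a e' v < y v" "mv (mv y' a e') e' v \<in> B" "mv y v e' \<in> B"
            using exchange[OF w y ce(2)] ae ce unfolding y'_def by (auto simp: mv_def)
          have "mv y a e' \<in> B"
          proof (cases "v = c")
            case True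
            have "mv (mv y' a e') e' v = mv y a e'"
              using True ae False ce yc unfolding y'_def by (auto simp: mv_def fun_eq_iff)
            then show ?thesis using v by simp
          next
            case vc: False
            have "v = a" using v(2) vc ae False ce unfolding y'_def by (auto simp: mv_def split: if_splits)
            then show ?thesis using v by simp
          qed
          then have "mg K \<sigma> a (y a) \<le> mg K \<sigma> e' (y e' + 1)"
            using loy ab ae ya ce unfolding islo_def by auto
          then show ?thesis using ya False unfolding \<rho>_def by (simp add: mg_def)
        qed
        then show ?thesis using d1 be ae y'e by (simp add: mg_upd)
      next
        case False
        then show ?thesis using l ae by (simp add: mg_upd)
      qed
    qed
  qed
  then show ?thesis using y'B isopt_iff unfolding \<rho>_def y'_def by auto
qed

lemma sens:
  assumes oz: "isopt E B K \<sigma> z" and c: "c \<in> E"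
    and no: "\<not> isopt E B K (\<sigma>(c := \<sigma> c + 1)) z"
  shows "\<exists>e'\<in>E. e' \<noteq> c \<and> 1 \<le> z c \<and> isopt E B K (\<sigma>(c := \<sigma> c + 1)) (mv z c e')"
proof -
  define \<rho> where "\<rho> = \<sigma>(c := \<sigma> c + 1)"
  have z: "z \<in> B" and loz: "islo E B K \<sigma> z" using oz isopt_iff by auto
  have regc: "regular_cost (K c)" using reg c by auto
  define Hc where "Hc = marg_cost (K c) (z c) (\<sigma> c + 1)"
  define Cand where "Cand = {e\<in>E. e \<noteq> c \<and> 1 \<le> z c \<and> mv z c e \<in> B}"
  define G where "G e = mg K \<sigma> e (z e + 1)" for e
  have "\<not> islo E B K \<rho> z" using no z isopt_iff unfolding \<rho>_def by auto
  then obtain a b where ab: "a \<in> E" "b \<in> E" "a \<noteq> b" "1 \<le> z a" "mv z a b \<in> B"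
    and viol: "mg K \<rho> b (z b + 1) < mg K \<rho> a (z a)"
    unfolding islo_def by (auto simp: not_le)
  have l0: "mg K \<sigma> a (z a) \<le> mg K \<sigma> b (z b + 1)" using loz ab unfolding islo_def by blast
  have ac: "a = c"
  proof (rule ccontr)
    assume ac: "a \<noteq> c"
    have "mg K \<sigma> b (z b + 1) \<le> mg K \<rho> b (z b + 1)"
      using reg_t[OF regc, of "z b + 1" "\<sigma> c"] unfolding \<rho>_def by (cases "b = c") (simp_all add: mg_def)
    then show False using viol l0 ac unfolding \<rho>_def by (simp add: mg_upd)
  qed
  have bC: "b \<in> Cand" using ab ac unfolding Cand_def by auto
  have Gb: "G b < Hc" using viol ac ab unfolding G_def Hc_def \<rho>_def by (simp add: mg_upd)
  have fC: "finite Cand" using finE unfolding Cand_def by auto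
  obtain e' where e': "e' \<in> Cand" and emin: "\<And>e. e \<in> Cand \<Longrightarrow> G e' \<le> G e"
  proof -
    have "finite (G ` Cand)" "G ` Cand \<noteq> {}" using fC bC by auto
    then have "Min (G ` Cand) \<in> G ` Cand" by (rule Min_in)
    then obtain e' where "e' \<in> Cand" "G e' = Min (G ` Cand)" by auto
    moreover have "\<And>e. e \<in> Cand \<Longrightarrow> Min (G ` Cand) \<le> G e" using fC by auto
    ultimately show ?thesis using that by auto
  qed
  have e'E: "e' \<in> E" and e'c: "e' \<noteq> c" and zc: "1 \<le> z c" and ze: "mv z c e' \<in> B"
    using e' unfolding Cand_def by auto
  have GH: "G e' < Hc" using emin[OF bC] Gb by simp
  define y where "y = mv z c e'"
  have yc: "y c = z c - 1" and ye: "y e' = z e' + 1" and yo: "\<And>x. x \<noteq> c \<Longrightarrow> x \<noteq> e' \<Longrightarrow> y x = z x"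
    using e'c unfolding y_def by (auto simp: mv_def)
  have mgr: "\<And>x k. mg K \<rho> x k = (if x = c then marg_cost (K c) k (\<sigma> c + 1) else mg K \<sigma> x k)"
    unfolding \<rho>_def by (simp add: mg_upd)
  have lz: "\<And>a b. a \<in> E \<Longrightarrow> b \<in> E \<Longrightarrow> a \<noteq> b \<Longrightarrow> 1 \<le> z a \<Longrightarrow> mv z a b \<in> B \<Longrightarrow>
      mg K \<sigma> a (z a) \<le> mg K \<sigma> b (z b + 1)" using loz unfolding islo_def by blast
  have regx: "\<And>x. x \<in> E \<Longrightarrow> regular_cost (K x)" using reg by auto
  have c_down: "mg K \<rho> c (y c) \<le> mg K \<sigma> c (z c)" if "1 \<le> y c"
  proof -
    have "marg_cost (K c) (z c - 1) (\<sigma> c + 1) \<le> marg_cost (K c) (z c - 1 + 1) (\<sigma> c)"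
      using reg_d[OF regc, of "z c - 1" "\<sigma> c"] that yc by simp
    then show ?thesis using yc zc unfolding \<rho>_def by (simp add: mg_def)
  qed
  have "islo E B K \<rho> y"
    unfolding islo_def
  proof (intro ballI impI)
    fix a b assume ab: "a \<in> E" "b \<in> E" "a \<noteq> b" "1 \<le> y a" "mv y a b \<in> B"
    show "mg K \<rho> a (y a) \<le> mg K \<rho> b (y b + 1)"
    proof (cases "a = c")
      case ac: True
      then have bc: "b \<noteq> c" using ab by auto
      have s1: "mg K \<rho> c (y c) \<le> mg K \<sigma> c (z c)" using c_down ab ac by simp
      show ?thesis
      proof (cases "b = e'")
        case True
        have "mg K \<sigma> c (z c) \<le> mg K \<sigma> e' (z e' + 1)" using lz[OF c e'E e'c[symmetric] zc ze] .
        also have "\<dots> \<le> mg K \<sigma> e' (z e' + 2)" unfolding mg_def using reg_x[OF regx[OF e'E]] by simp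
        finally show ?thesis using s1 True ac e'c ye by (simp add: mgr)
      next
        case be: False
        have w: "mv y c b \<in> B" using ab ac by simp
        obtain v where v: "v \<in> E" "mv y c b v < z v" "mv z v b \<in> B"
          using exchange[OF w z ab(2)] bc be e'c unfolding y_def by (auto simp: mv_def)
        have "v = c" using v(2) bc be e'c unfolding y_def by (auto simp: mv_def split: if_splits)
        then have "mg K \<sigma> c (z c) \<le> mg K \<sigma> b (z b + 1)" using lz[OF c ab(2) bc[symmetric] zc] v by simp
        then show ?thesis using s1 ac bc be yo by (simp add: mgr)
      qed
    next
      case anc: False
      show ?thesis
      proof (cases "a = e'")
        case ae: True
        show ?thesis
        proof (cases "b = c")
          case True
          have "y c + 1 = z c" using yc zc by simp
          then show ?thesis using GH ae True e'c ye unfolding G_def Hc_def by (simp add: mgr)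
        next
          case bc: False
          have bE: "b \<noteq> e'" using ab ae by auto
          have "mv y e' b = mv z c b" using bc bE e'c zc unfolding y_def by (auto simp: mv_def fun_eq_iff)
          then have "b \<in> Cand" using ab ae bc zc unfolding Cand_def by auto
          then have "G e' \<le> G b" by (rule emin)
          then show ?thesis using ae bc bE e'c ye yo unfolding G_def by (simp add: mgr)
        qed
      next
        case ane: False
        have ya: "y a = z a" using yo anc ane by simp
        have za: "1 \<le> z a" using ab ya by simp
        show ?thesis
        proof (cases "b = c")
          case True
          have "mv y a c = mv z a e'" using True anc ane e'c zc unfolding y_def by (auto simp: mv_def fun_eq_iff)
          then have "mg K \<sigma> a (z a) \<le> G e'" using lz[OF ab(1) e'E ane za] ab True unfolding G_def by simp
          then show ?thesis using GH True anc ya yc zc unfolding Hc_def by (simp add: mgr)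
        next
          case bc: False
          show ?thesis
          proof (cases "b = e'")
            case True
            have w: "mv y a e' \<in> B" using ab True by simp
            obtain v where v: "v \<in> E" "mv y a e' v < z v" "mv (mv y a e') e' v \<in> B" "mv z v e' \<in> B"
              using exchange[OF w z e'E] ane e'c anc unfolding y_def by (auto simp: mv_def)
            have "mv z a e' \<in> B"
            proof (cases "v = c")
              case True
              have "mv (mv y a e') e' v = mv z a e'" using True anc ane e'c zc unfolding y_def
                by (auto simp: mv_def fun_eq_iff)
              then show ?thesis using v by simp
            next
              case False
              have "v = a" using v(2) False anc ane e'c unfolding y_def by (auto simp: mv_def split: if_splits)
              then show ?thesis using v by simp
            qed
            then have "mg K \<sigma> a (z a) \<le> mg K \<sigma> e' (z e' + 1)" using lz[OF ab(1) e'E ane za] by simp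
            also have "\<dots> \<le> mg K \<sigma> e' (z e' + 2)" unfolding mg_def using reg_x[OF regx[OF e'E]] by simp
            finally show ?thesis using True anc ya ye e'c by (simp add: mgr)
          next
            case bne: False
            have yb: "y b = z b" using yo bc bne by simp
            have w: "mv y a b \<in> B" using ab by simp
            obtain v where v: "v \<in> E" "mv y a b v < z v" "mv (mv y a b) b v \<in> B" "mv z v b \<in> B"
              using exchange[OF w z ab(2)] ab bc bne yb unfolding y_def by (auto simp: mv_def)
            have "mg K \<sigma> a (z a) \<le> mg K \<sigma> b (z b + 1)"
            proof (cases "v = c")
              case True
              have "mv (mv y a b) b v = mv z a e'" using True anc ane bc bne e'c zc ab(3) unfolding y_def
                by (auto simp: mv_def fun_eq_iff)
              then have "mg K \<sigma> a (z a) \<le> G e'" using lz[OF ab(1) e'E ane za] v unfolding G_def by simp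
              moreover have "b \<in> Cand" using v True ab bc zc unfolding Cand_def by auto
              ultimately show ?thesis using emin unfolding G_def by force
            next
              case False
              have "v = a" using v(2) False anc ane bc bne e'c ab(3) unfolding y_def by (auto simp: mv_def split: if_splits)
              then show ?thesis using lz[OF ab(1,2,3) za] v by simp
            qed
            then show ?thesis using anc bc ya yb by (simp add: mgr)
          qed
        qed
      qed
    qed
  qed
  moreover have "y \<in> B" using ze y_def by simp
  ultimately show ?thesis using isopt_iff e'E e'c zc unfolding \<rho>_def y_def by blast
qed

end



definition trunc :: "('e set \<Rightarrow> nat) \<Rightarrow> nat \<Rightarrow> 'e set \<Rightarrow> nat" where
  "trunc f \<delta> = (\<lambda>U. min (f U) \<delta>)"

lemma trunc_pr:
  assumes "polymatroid_rank E f" shows "polymatroid_rank E (trunc f \<delta>)"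
proof -
  have e: "f {} = 0" and mo: "\<And>U V. U \<subseteq> V \<Longrightarrow> V \<subseteq> E \<Longrightarrow> f U \<le> f V"
    and sb: "\<And>U V. U \<subseteq> E \<Longrightarrow> V \<subseteq> E \<Longrightarrow> f (U \<union> V) + f (U \<inter> V) \<le> f U + f V"
    using assms by (auto simp: polymatroid_rank_def)
  have "min (f (U \<union> V)) \<delta> + min (f (U \<inter> V)) \<delta> \<le> min (f U) \<delta> + min (f V) \<delta>"
    if "U \<subseteq> E" "V \<subseteq> E" for U V
  proof -
    have 1: "f (U \<inter> V) \<le> f U" "f (U \<inter> V) \<le> f V" using mo that by auto
    show ?thesis using sb[OF that] 1 by (simp add: min_def)
  qed
  moreover have "min (f U) \<delta> \<le> min (f V) \<delta>" if "U \<subseteq> V" "V \<subseteq> E" for U V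
    using mo[OF that] by (simp add: min_def)
  ultimately show ?thesis using e unfolding polymatroid_rank_def trunc_def by auto
qed

lemma base_trunc:
  assumes "finite E" "\<delta> \<le> f E"
  shows "base_set E f \<delta> = base_set E (trunc f \<delta>) (trunc f \<delta> E)"
proof -
  have tE: "trunc f \<delta> E = \<delta>" using assms by (simp add: trunc_def)
  have sm: "sum x U \<le> sum x E" if "U \<subseteq> E" for x :: "'a \<Rightarrow> nat" and U
    using sum_mono2[OF assms(1) that, of x] by simp
  have "x \<in> base_set E f \<delta> \<longleftrightarrow> x \<in> base_set E (trunc f \<delta>) \<delta>" for x
  proof
    assume x: "x \<in> base_set E f \<delta>"
    have "sum x U \<le> trunc f \<delta> U" if "U \<subseteq> E" for U
      using x sm[OF that, of x] that unfolding base_set_def trunc_def by auto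
    then show "x \<in> base_set E (trunc f \<delta>) \<delta>" using x unfolding base_set_def by auto
  next
    assume x: "x \<in> base_set E (trunc f \<delta>) \<delta>"
    have "sum x U \<le> f U" if "U \<subseteq> E" for U
      using x that unfolding base_set_def trunc_def by auto
    then show "x \<in> base_set E f \<delta>" using x unfolding base_set_def by auto
  qed
  then show ?thesis using tE by auto
qed

lemma pcost_trunc:
  assumes "finite E" "polymatroid_rank E f" "\<And>e. e \<in> E \<Longrightarrow> regular_cost (K e)"
  shows "pcost E (trunc f \<delta>) K"
  using assms trunc_pr by (unfold_locales) auto

lemma base_down:
  assumes w: "w \<in> base_set E f (Suc \<delta>)" and e: "e \<in> E" "1 \<le> w e" and fE: "finite E"
  shows "w(e := w e - 1) \<in> base_set E f \<delta>"
proof -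
  have "sum (w(e := w e - 1)) U \<le> sum w U" for U
    by (rule sum_mono) auto
  moreover have "sum (w(e := w e - 1)) E + w e = sum w E + (w e - 1)"
    using sum_upd_nat[OF fE, of w e "w e - 1"] e by simp
  ultimately show ?thesis using w e unfolding base_set_def
    by (auto simp: PiE_def extensional_def intro: order_trans)
qed

lemma aug:
  assumes fE: "finite E" and pr: "polymatroid_rank E f" and reg: "\<And>e. e \<in> E \<Longrightarrow> regular_cost (K e)"
    and oz: "isopt E (base_set E f \<delta>) K \<tau> z" and dl: "\<delta> + 1 \<le> f E"
  shows "\<exists>e\<in>E. isopt E (base_set E f (\<delta> + 1)) K \<tau> (z(e := z e + 1)) \<and>
    (1 \<le> \<tau> e \<longrightarrow> isopt E (base_set E f (\<delta> + 1)) K (\<tau>(e := \<tau> e - 1)) (z(e := z e + 1)))"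
proof -
  interpret P0: pcost E "trunc f \<delta>" K using pcost_trunc[OF fE pr reg] .
  interpret P1: pcost E "trunc f (\<delta> + 1)" K using pcost_trunc[OF fE pr reg] .
  interpret PF: poly E f using fE pr by unfold_locales
  have B0: "base_set E f \<delta> = P0.B" using base_trunc[OF fE, of \<delta> f] dl by simp
  have B1: "base_set E f (\<delta> + 1) = P1.B" using base_trunc[of E "\<delta> + 1" f] fE dl by simp
  have zB: "z \<in> base_set E f \<delta>" using oz unfolding isopt_def by auto
  have lo0: "islo E (base_set E f \<delta>) K \<tau> z" using isopt_islo[OF fE oz] .
  have regx: "\<And>x. x \<in> E \<Longrightarrow> regular_cost (K x)" using reg by auto
  define Cand where "Cand = {e\<in>E. z(e := z e + 1) \<in> base_set E f (\<delta> + 1)}"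
  have "Cand \<noteq> {}"
  proof -
    have zP: "PF.inP z" using zB unfolding base_set_def PF.inP_def by auto
    obtain W where W: "PF.tight z W" and Wall: "\<forall>U. PF.tight z U \<longrightarrow> U \<subseteq> W"
      using PF.tight_maxall[OF zP] by blast
    have sE: "sum z E = \<delta>" using zB unfolding base_set_def by auto
    have "W \<noteq> E" using W sE dl unfolding PF.tight_def by auto
    then obtain e where e: "e \<in> E" "e \<notin> W" using W unfolding PF.tight_def by auto
    have "z(e := z e + 1) \<in> base_set E f (\<delta> + 1)"
    proof -
      have "sum (z(e := z e + 1)) U \<le> f U" if U: "U \<subseteq> E" for U
      proof -
        have fU: "finite U" using U fE by (auto intro: finite_subset)
        have s: "sum (z(e := z e + 1)) U + (if e \<in> U then z e else 0) = sum z U + (if e \<in> U then z e + 1 else 0)"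
          by (rule sum_upd_nat[OF fU])
        have le: "sum z U \<le> f U" using zP U unfolding PF.inP_def by auto
        show ?thesis
        proof (cases "e \<in> U")
          case True
          then have "\<not> PF.tight z U" using Wall e by blast
          then have "sum z U < f U" using le U unfolding PF.tight_def by auto
          then show ?thesis using s True by auto
        next
          case False then show ?thesis using s le by auto
        qed
      qed
      moreover have "sum (z(e := z e + 1)) E = \<delta> + 1" using sum_upd_nat[OF fE, of z e "z e + 1"] e sE by simp
      moreover have "z(e := z e + 1) \<in> E \<rightarrow>\<^sub>E UNIV" using zB e unfolding base_set_def by (auto simp: PiE_def extensional_def)
      ultimately show ?thesis unfolding base_set_def by auto
    qed
    then show ?thesis using e unfolding Cand_def by auto
  qed
  define G where "G e = mg K \<tau> e (z e + 1)" for e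
  have fC: "finite Cand" using fE unfolding Cand_def by auto
  obtain e where eC: "e \<in> Cand" and emin: "\<And>x. x \<in> Cand \<Longrightarrow> G e \<le> G x"
  proof -
    have "finite (G ` Cand)" "G ` Cand \<noteq> {}" using fC \<open>Cand \<noteq> {}\<close> by auto
    then have "Min (G ` Cand) \<in> G ` Cand" by (rule Min_in)
    then obtain e' where "e' \<in> Cand" "G e' = Min (G ` Cand)" by auto
    moreover have "\<And>x. x \<in> Cand \<Longrightarrow> Min (G ` Cand) \<le> G x" using fC by auto
    ultimately show ?thesis using that by auto
  qed
  have eE: "e \<in> E" and yB: "z(e := z e + 1) \<in> base_set E f (\<delta> + 1)" using eC unfolding Cand_def by auto
  define y where "y = z(e := z e + 1)"
  have lz: "\<And>a b. a \<in> E \<Longrightarrow> b \<in> E \<Longrightarrow> a \<noteq> b \<Longrightarrow> 1 \<le> z a \<Longrightarrow> mv z a b \<in> base_set E f \<delta> \<Longrightarrow>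
      mg K \<tau> a (z a) \<le> mg K \<tau> b (z b + 1)" using lo0 unfolding islo_def by blast
  have down: "mv z a b \<in> base_set E f \<delta>" if "a \<in> E" "b \<in> E" "a \<noteq> b" "a \<noteq> e" "mv y a b \<in> base_set E f (\<delta> + 1)" "1 \<le> y a" for a b
  proof -
    have "1 \<le> mv y a b e" using that unfolding y_def by (auto simp: mv_def)
    then have "(mv y a b)(e := mv y a b e - 1) \<in> base_set E f \<delta>" using base_down[of "mv y a b" E f \<delta> e] that eE fE by simp
    moreover have "(mv y a b)(e := mv y a b e - 1) = mv z a b" using that unfolding y_def by (auto simp: mv_def fun_eq_iff)
    ultimately show ?thesis by simp
  qed
  have ab_case: "mg K \<tau> a (z a) \<le> mg K \<tau> e (z e + 1)"
    if "a \<in> E" "a \<noteq> e" "1 \<le> y a" "mv y a e \<in> base_set E f (\<delta> + 1)" for a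
    using lz[OF that(1) eE that(2)] down[OF that(1) eE that(2) that(2) that(4,3)] that unfolding y_def by simp
  have lo1: "islo E (base_set E f (\<delta> + 1)) K \<tau> y"
    unfolding islo_def
  proof (intro ballI impI)
    fix a b assume ab: "a \<in> E" "b \<in> E" "a \<noteq> b" "1 \<le> y a" "mv y a b \<in> base_set E f (\<delta> + 1)"
    show "mg K \<tau> a (y a) \<le> mg K \<tau> b (y b + 1)"
    proof (cases "a = e")
      case True
      have "mv y a b = z(b := z b + 1)" using True ab unfolding y_def by (auto simp: mv_def fun_eq_iff)
      then have "b \<in> Cand" using ab unfolding Cand_def by simp
      then show ?thesis using emin True ab unfolding G_def y_def by force
    next
      case ae: False
      show ?thesis
      proof (cases "b = e")
        case True
        have "mg K \<tau> e (z e + 1) \<le> mg K \<tau> e (z e + 2)" unfolding mg_def using reg_x[OF regx[OF eE]] by simp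
        then show ?thesis using ab_case[OF ab(1) ae ab(4)] ab True ae unfolding y_def by simp
      next
        case False
        then show ?thesis using lz[OF ab(1-3)] down[OF ab(1-3) ae ab(5,4)] ab ae unfolding y_def by simp
      qed
    qed
  qed
  have o1: "isopt E (base_set E f (\<delta> + 1)) K \<tau> y" using lo1 yB P1.isopt_iff B1 unfolding y_def by simp
  have "isopt E (base_set E f (\<delta> + 1)) K (\<tau>(e := \<tau> e - 1)) y" if te: "1 \<le> \<tau> e"
  proof -
    have "islo E (base_set E f (\<delta> + 1)) K (\<tau>(e := \<tau> e - 1)) y"
      unfolding islo_def
    proof (intro ballI impI)
      fix a b assume ab: "a \<in> E" "b \<in> E" "a \<noteq> b" "1 \<le> y a" "mv y a b \<in> base_set E f (\<delta> + 1)"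
      have l: "mg K \<tau> a (y a) \<le> mg K \<tau> b (y b + 1)" using lo1 ab unfolding islo_def by blast
      show "mg K (\<tau>(e := \<tau> e - 1)) a (y a) \<le> mg K (\<tau>(e := \<tau> e - 1)) b (y b + 1)"
      proof (cases "a = e")
        case True
        have "marg_cost (K e) (y e) (\<tau> e - 1) \<le> marg_cost (K e) (y e) (\<tau> e - 1 + 1)"
          using reg_t[OF regx[OF eE], of "y e"] unfolding y_def by simp
        then show ?thesis using l True ab te by (simp add: mg_upd mg_def)
      next
        case ae: False
        show ?thesis
        proof (cases "b = e")
          case True
          have "marg_cost (K e) (z e + 1) (\<tau> e - 1 + 1) \<le> marg_cost (K e) (z e + 1 + 1) (\<tau> e - 1)"
            using reg_d[OF regx[OF eE], of "z e + 1" "\<tau> e - 1"] by simp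
          then have "mg K \<tau> e (z e + 1) \<le> marg_cost (K e) (y e + 1) (\<tau> e - 1)"
            using te unfolding y_def by (simp add: mg_def)
          then show ?thesis using ab_case[OF ab(1) ae ab(4)] ab True ae unfolding y_def by (simp add: mg_upd)
        next
          case False
          then show ?thesis using l ae by (simp add: mg_upd)
        qed
      qed
    qed
    then show ?thesis using yB P1.isopt_iff B1 unfolding y_def by simp
  qed
  then show ?thesis using o1 eE unfolding y_def by blast
qed



lemma PiE_upd_in: "x \<in> PiE N T \<Longrightarrow> j \<in> N \<Longrightarrow> w \<in> T j \<Longrightarrow> x(j := w) \<in> PiE N T"
  by (auto simp: PiE_def extensional_def Pi_def)

lemma finite_base: "finite E \<Longrightarrow> finite (base_set E f \<delta>)"
proof -
  assume fE: "finite E"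
  have "base_set E f \<delta> \<subseteq> PiE E (\<lambda>_. {..\<delta>})"
  proof
    fix x assume x: "x \<in> base_set E f \<delta>"
    have "x e \<le> \<delta>" if "e \<in> E" for e
      using member_le_sum[of e E x] x that fE unfolding base_set_def by auto
    then show "x \<in> PiE E (\<lambda>_. {..\<delta>})" using x unfolding base_set_def by (auto simp: PiE_def)
  qed
  moreover have "finite (PiE E (\<lambda>_. {..\<delta>}))" using fE by (intro finite_PiE) auto
  ultimately show ?thesis by (rule finite_subset)
qed

locale game =
  fixes N :: "nat set" and E :: "nat set" and f :: "nat \<Rightarrow> nat set \<Rightarrow> nat"
    and C :: "nat \<Rightarrow> nat \<Rightarrow> nat \<Rightarrow> nat \<Rightarrow> real"
  assumes finN: "finite N" and finE: "finite E"
    and rank: "\<And>i. i \<in> N \<Longrightarrow> polymatroid_rank E (f i)"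
    and regular: "\<And>i e. i \<in> N \<Longrightarrow> e \<in> E \<Longrightarrow> regular_cost (C i e)"
begin

definition oth :: "(nat \<Rightarrow> nat \<Rightarrow> nat) \<Rightarrow> nat \<Rightarrow> nat \<Rightarrow> nat" where
  "oth x i e = (\<Sum>j\<in>N - {i}. x j e)"
definition BB :: "(nat \<Rightarrow> nat) \<Rightarrow> nat \<Rightarrow> (nat \<Rightarrow> nat) set" where
  "BB \<delta> i = base_set E (f i) (\<delta> i)"
definition OPT where "OPT \<delta> i \<tau> z \<longleftrightarrow> isopt E (BB \<delta> i) (C i) \<tau> z"
definition eqm where "eqm \<delta> x \<longleftrightarrow> x \<in> PiE N (BB \<delta>) \<and> (\<forall>i\<in>N. OPT \<delta> i (oth x i) (x i))"
definition Inv where "Inv \<delta> x c \<longleftrightarrow> (\<forall>j\<in>N. if 1 \<le> oth x j c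
    then OPT \<delta> j ((oth x j)(c := oth x j c - 1)) (x j) else OPT \<delta> j (oth x j) (x j))"

lemma pc: "i \<in> N \<Longrightarrow> pcost E (trunc (f i) \<delta>) (C i)"
  using pcost_trunc[OF finE rank] regular by blast

lemma BB_eq: "i \<in> N \<Longrightarrow> \<delta> i \<le> f i E \<Longrightarrow> BB \<delta> i = base_set E (trunc (f i) (\<delta> i)) (trunc (f i) (\<delta> i) E)"
  unfolding BB_def using base_trunc[of E "\<delta> i" "f i"] finE by simp

lemma OPT_zero:
  assumes "i \<in> N" "\<delta> i \<le> f i E" "OPT \<delta> i \<sigma> z" "c \<in> E" "z c = 0"
  shows "OPT \<delta> i (\<sigma>(c := \<sigma> c + 1)) z"
proof -
  interpret P: pcost E "trunc (f i) (\<delta> i)" "C i" using pc[OF assms(1)] .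
  show ?thesis using P.opt_zero[of \<sigma> z c] assms BB_eq[of i \<delta>, OF assms(1,2)] unfolding OPT_def by simp
qed

lemma OPT_key:
  assumes "i \<in> N" "\<delta> i \<le> f i E" "OPT \<delta> i \<sigma> y" "OPT \<delta> i (\<sigma>(c := \<sigma> c + 1)) (mv y c e')"
    "c \<in> E" "e' \<in> E" "c \<noteq> e'" "1 \<le> y c" "1 \<le> \<sigma> e'"
  shows "OPT \<delta> i ((\<sigma>(c := \<sigma> c + 1))(e' := \<sigma> e' - 1)) (mv y c e')"
proof -
  interpret P: pcost E "trunc (f i) (\<delta> i)" "C i" using pc[OF assms(1)] .
  show ?thesis using P.key[of \<sigma> y c e'] assms BB_eq[of i \<delta>, OF assms(1,2)] unfolding OPT_def by simp
qed

lemma OPT_sens: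
  assumes "i \<in> N" "\<delta> i \<le> f i E" "OPT \<delta> i \<sigma> z" "c \<in> E" "\<not> OPT \<delta> i (\<sigma>(c := \<sigma> c + 1)) z"
  shows "\<exists>e'\<in>E. e' \<noteq> c \<and> 1 \<le> z c \<and> OPT \<delta> i (\<sigma>(c := \<sigma> c + 1)) (mv z c e')"
proof -
  interpret P: pcost E "trunc (f i) (\<delta> i)" "C i" using pc[OF assms(1)] .
  show ?thesis using P.sens[of \<sigma> z c] assms BB_eq[of i \<delta>, OF assms(1,2)] unfolding OPT_def by simp
qed

lemma sum_upd_fun:
  fixes x :: "nat \<Rightarrow> nat \<Rightarrow> nat"
  assumes "j \<in> N"
  shows "(\<Sum>i\<in>N. (x(j := w)) i e) + x j e = (\<Sum>i\<in>N. x i e) + w e"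
proof -
  have "(\<Sum>i\<in>N. (x(j := w)) i e) = sum ((\<lambda>i. x i e)(j := w e)) N" by (rule sum.cong) auto
  then show ?thesis using sum_upd_nat[OF finN, of "\<lambda>i. x i e" j "w e"] assms by simp
qed

lemma sum_split: "j \<in> N \<Longrightarrow> (\<Sum>i\<in>N. x i e) = x j e + oth x j e"
  unfolding oth_def using sum.remove[OF finN, of j "\<lambda>i. x i e"] by simp

lemma oth_upd_self: "oth (x(j := w)) j = oth x j"
  unfolding oth_def by (intro ext sum.cong) auto

lemma oth_upd_other:
  fixes x :: "nat \<Rightarrow> nat \<Rightarrow> nat"
  assumes "l \<noteq> j" "j \<in> N"
  shows "oth (x(j := w)) l e + x j e = oth x l e + w e"
proof -
  have "(\<Sum>i\<in>N - {l}. (x(j := w)) i e) = sum ((\<lambda>i. x i e)(j := w e)) (N - {l})" by (rule sum.cong) auto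
  moreover have "j \<in> N - {l}" using assms by auto
  ultimately show ?thesis unfolding oth_def using sum_upd_nat[of "N - {l}" "\<lambda>i. x i e" j "w e"] finN by simp
qed

lemma oth_ge: "j \<in> N \<Longrightarrow> l \<noteq> j \<Longrightarrow> x j e \<le> oth x l e"
  unfolding oth_def using member_le_sum[of j "N - {l}" "\<lambda>i. x i e"] finN by auto


lemma cascade:
  fixes \<delta> :: "nat \<Rightarrow> nat" and l0 :: "nat \<Rightarrow> nat"
  assumes dl: "\<And>i. i \<in> N \<Longrightarrow> \<delta> i \<le> f i E" and c0: "c0 \<in> E" and x0: "x0 \<in> PiE N (BB \<delta>)"
    and ld0: "\<forall>e\<in>E. (\<Sum>j\<in>N. x0 j e) = l0 e + (if e = c0 then 1 else 0)" and inv0: "Inv \<delta> x0 c0"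
  shows "\<exists>x. eqm \<delta> x"
proof -
  define valid where "valid x c \<longleftrightarrow> x \<in> PiE N (BB \<delta>) \<and> c \<in> E \<and>
    (\<forall>e\<in>E. (\<Sum>j\<in>N. x j e) = l0 e + (if e = c then 1 else 0)) \<and> Inv \<delta> x c" for x c
  define S where "S = {(x, c). valid x c}"
  have fS: "finite S"
  proof -
    have "S \<subseteq> PiE N (BB \<delta>) \<times> E" unfolding S_def valid_def by auto
    moreover have "finite (PiE N (BB \<delta>))" using finN finite_base finE unfolding BB_def by (intro finite_PiE) auto
    ultimately show ?thesis using finE finite_subset by blast
  qed
  define Q where "Q j e a = (\<Sum>k\<in>{1..a}. marg_cost (C j e) k (l0 e + 1 - k))" for j e a
  define KQ where "KQ j = (\<lambda>e a (t::nat). Q j e a)" for j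
  define \<Phi> where "\<Phi> x = (\<Sum>j\<in>N. cst E (KQ j) (\<lambda>_. 0) (x j))" for x
  have S0: "(x0, c0) \<in> S" unfolding S_def valid_def using assms by auto
  obtain x c where xc: "(x, c) \<in> S" and xmin: "\<And>y c'. (y, c') \<in> S \<Longrightarrow> \<Phi> x \<le> \<Phi> y"
  proof -
    let ?F = "(\<lambda>s. \<Phi> (fst s))"
    have "finite (?F ` S)" "?F ` S \<noteq> {}" using fS S0 by auto
    then have "Min (?F ` S) \<in> ?F ` S" by (rule Min_in)
    then obtain s where s: "s \<in> S" "?F s = Min (?F ` S)" by auto
    moreover have "\<And>t. t \<in> S \<Longrightarrow> Min (?F ` S) \<le> ?F t" using fS by auto
    ultimately show ?thesis using that[of "fst s" "snd s"] by (cases s) force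
  qed
  have v: "valid x c" using xc S_def by auto
  then have xP: "x \<in> PiE N (BB \<delta>)" and cE: "c \<in> E"
    and ld: "\<forall>e\<in>E. (\<Sum>j\<in>N. x j e) = l0 e + (if e = c then 1 else 0)" and inv: "Inv \<delta> x c"
    unfolding valid_def by auto
  have "OPT \<delta> j (oth x j) (x j)" if jN: "j \<in> N" for j
  proof (rule ccontr)
    assume nopt: "\<not> OPT \<delta> j (oth x j) (x j)"
    define ot where "ot = oth x j"
    have o1: "1 \<le> ot c" using inv jN nopt unfolding Inv_def ot_def by (auto split: if_splits)
    define \<sigma> where "\<sigma> = ot(c := ot c - 1)"
    have o\<sigma>: "OPT \<delta> j \<sigma> (x j)" using inv jN o1 unfolding Inv_def \<sigma>_def ot_def by auto
    have \<sigma>c: "\<sigma>(c := \<sigma> c + 1) = ot" using o1 unfolding \<sigma>_def by auto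
    obtain e' where e': "e' \<in> E" "e' \<noteq> c" "1 \<le> x j c" and ow: "OPT \<delta> j ot (mv (x j) c e')"
      using OPT_sens[OF jN dl[OF jN] o\<sigma> cE] nopt \<sigma>c ot_def by auto
    define w where "w = mv (x j) c e'"
    define x' where "x' = x(j := w)"
    have wc: "w c = x j c - 1" "w e' = x j e' + 1" "\<And>e. e \<noteq> c \<Longrightarrow> e \<noteq> e' \<Longrightarrow> w e = x j e"
      using e' unfolding w_def by (auto simp: mv_def)
    have wB: "w \<in> BB \<delta> j" using ow unfolding OPT_def isopt_def w_def by auto
    have x'P: "x' \<in> PiE N (BB \<delta>)" using PiE_upd_in[OF xP jN wB] x'_def by simp
    have ld': "\<forall>e\<in>E. (\<Sum>i\<in>N. x' i e) = l0 e + (if e = e' then 1 else 0)"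
    proof
      fix e assume eE: "e \<in> E"
      have s: "(\<Sum>i\<in>N. x' i e) + x j e = (\<Sum>i\<in>N. x i e) + w e" unfolding x'_def by (rule sum_upd_fun[OF jN])
      show "(\<Sum>i\<in>N. x' i e) = l0 e + (if e = e' then 1 else 0)"
        using s ld eE wc e' by (cases "e = c"; cases "e = e'") auto
    qed
    have oth': "oth x' j = ot" unfolding x'_def ot_def by (rule oth_upd_self)
    have inv': "Inv \<delta> x' e'"
      unfolding Inv_def
    proof
      fix l assume lN: "l \<in> N"
      show "if 1 \<le> oth x' l e' then OPT \<delta> l ((oth x' l)(e' := oth x' l e' - 1)) (x' l) else OPT \<delta> l (oth x' l) (x' l)"
      proof (cases "l = j")
        case True
        have "OPT \<delta> j (ot(e' := ot e' - 1)) w" if "1 \<le> ot e'"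
        proof -
          have se: "\<sigma> e' = ot e'" using e' unfolding \<sigma>_def by simp
          have "OPT \<delta> j ((\<sigma>(c := \<sigma> c + 1))(e' := \<sigma> e' - 1)) (mv (x j) c e')"
            by (rule OPT_key[OF jN dl[OF jN] o\<sigma>]) (use ow \<sigma>c e' cE that se in auto)
          then show ?thesis using \<sigma>c se w_def by simp
        qed
        then show ?thesis using True oth' ow w_def x'_def by auto
      next
        case False
        have ol: "1 \<le> oth x l c" using oth_ge[OF jN False, of x c] e' by simp
        have il: "OPT \<delta> l ((oth x l)(c := oth x l c - 1)) (x l)" using inv lN ol unfolding Inv_def by auto
        have r: "oth x' l e + x j e = oth x l e + w e" for e unfolding x'_def by (rule oth_upd_other[OF False jN])
        have ge: "1 \<le> oth x' l e'" using r[of e'] wc by simp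
        have feq: "(oth x' l)(e' := oth x' l e' - 1) = (oth x l)(c := oth x l c - 1)"
        proof
          fix e show "((oth x' l)(e' := oth x' l e' - 1)) e = ((oth x l)(c := oth x l c - 1)) e"
            using r[of e] wc e' by (cases "e = c"; cases "e = e'") auto
        qed
        have "x' l = x l" using False x'_def by simp
        then show ?thesis using ge feq il by simp
      qed
    qed
    have vx': "(x', e') \<in> S" unfolding S_def valid_def using x'P e' ld' inv' by auto
    have Qs: "Q j e (Suc a) = Q j e a + marg_cost (C j e) (Suc a) (l0 e + 1 - Suc a)" for e a
      unfolding Q_def by simp
    have mgQ: "mg (KQ j) (\<lambda>_. 0) e k = marg_cost (C j e) k (l0 e + 1 - k)" if k1: "1 \<le> k" for e k
    proof -
      obtain a where a: "k = Suc a" using k1 by (cases k) auto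
      have "mg (KQ j) (\<lambda>_. 0) e k = Q j e k - Q j e (k - 1)" unfolding mg_def marg_cost_def KQ_def by simp
      then show ?thesis using Qs[of e a] a by simp
    qed
    have Pw: "cst E (KQ j) (\<lambda>_. 0) w = cst E (KQ j) (\<lambda>_. 0) (x j) - mg (KQ j) (\<lambda>_. 0) c (x j c) + mg (KQ j) (\<lambda>_. 0) e' (x j e' + 1)"
      unfolding w_def using cst_mv[of E c e' "x j" "KQ j" "\<lambda>_. 0"] finE cE e' by simp
    have ldc: "l0 c + 1 - x j c = ot c" using ld cE sum_split[OF jN, of x c] unfolding ot_def by simp
    have lde: "l0 e' + 1 - (x j e' + 1) = ot e'" using ld e' sum_split[OF jN, of x e'] unfolding ot_def by simp
    have cost_strict: "mg (C j) ot e' (x j e' + 1) < mg (C j) ot c (x j c)"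
    proof -
      have xjB: "x j \<in> BB \<delta> j" using xP jN by auto
      obtain y where y: "y \<in> BB \<delta> j" "cst E (C j) ot y < cst E (C j) ot (x j)"
        using nopt xjB unfolding OPT_def isopt_def ot_def by (auto simp: not_le)
      have "cst E (C j) ot w \<le> cst E (C j) ot y" using ow y unfolding OPT_def isopt_def w_def by auto
      moreover have "cst E (C j) ot w = cst E (C j) ot (x j) - mg (C j) ot c (x j c) + mg (C j) ot e' (x j e' + 1)"
        unfolding w_def using cst_mv[of E c e' "x j" "C j" ot] finE cE e' by simp
      ultimately show ?thesis using y by simp
    qed
    have Pless: "cst E (KQ j) (\<lambda>_. 0) w < cst E (KQ j) (\<lambda>_. 0) (x j)"
    proof -
      have "mg (KQ j) (\<lambda>_. 0) c (x j c) = mg (C j) ot c (x j c)"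
        using mgQ[of "x j c" c] e' ldc unfolding mg_def by simp
      moreover have "mg (KQ j) (\<lambda>_. 0) e' (x j e' + 1) = mg (C j) ot e' (x j e' + 1)"
        using mgQ[of "x j e' + 1" e'] lde unfolding mg_def by simp
      ultimately show ?thesis using Pw cost_strict by simp
    qed
    have "\<Phi> x' < \<Phi> x"
    proof -
      have "\<Phi> x' = cst E (KQ j) (\<lambda>_. 0) w + (\<Sum>i\<in>N - {j}. cst E (KQ i) (\<lambda>_. 0) (x' i))"
        unfolding \<Phi>_def using sum.remove[OF finN jN, of "\<lambda>i. cst E (KQ i) (\<lambda>_. 0) (x' i)"] x'_def by simp
      moreover have "\<Phi> x = cst E (KQ j) (\<lambda>_. 0) (x j) + (\<Sum>i\<in>N - {j}. cst E (KQ i) (\<lambda>_. 0) (x i))"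
        unfolding \<Phi>_def using sum.remove[OF finN jN, of "\<lambda>i. cst E (KQ i) (\<lambda>_. 0) (x i)"] by simp
      moreover have "(\<Sum>i\<in>N - {j}. cst E (KQ i) (\<lambda>_. 0) (x' i)) = (\<Sum>i\<in>N - {j}. cst E (KQ i) (\<lambda>_. 0) (x i))"
        unfolding x'_def by (rule sum.cong) auto
      ultimately show ?thesis using Pless by simp
    qed
    then show False using xmin[OF vx'] by simp
  qed
  then show ?thesis using xP unfolding eqm_def by auto
qed


lemma exists_eq: "\<forall>i\<in>N. \<delta> i \<le> f i E \<Longrightarrow> \<exists>x. eqm \<delta> x"
proof (induction "\<Sum>i\<in>N. \<delta> i" arbitrary: \<delta>)
  case 0
  then have d0: "\<forall>i\<in>N. \<delta> i = 0" using finN by simp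
  define x where "x = (\<lambda>i\<in>N. \<lambda>e\<in>E. (0::nat))"
  have xi: "x i \<in> BB \<delta> i" if "i \<in> N" for i
  proof -
    have "sum (\<lambda>e\<in>E. (0::nat)) U = 0" if "U \<subseteq> E" for U
      using that by (intro sum.neutral) auto
    then show ?thesis using that d0 unfolding x_def BB_def base_set_def by (auto simp: PiE_def extensional_def)
  qed
  have "OPT \<delta> i (oth x i) (x i)" if iN: "i \<in> N" for i
    unfolding OPT_def isopt_def
  proof (intro conjI ballI)
    show "x i \<in> BB \<delta> i" using xi iN .
    fix y assume y: "y \<in> BB \<delta> i"
    have "sum y E = 0" using y d0 iN unfolding BB_def base_set_def by auto
    then have "\<forall>e\<in>E. y e = 0" using finE by simp
    then show "cst E (C i) (oth x i) (x i) \<le> cst E (C i) (oth x i) y"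
      unfolding cst_def x_def using iN by (simp cong: sum.cong)
  qed
  moreover have "x \<in> PiE N (BB \<delta>)" using xi unfolding x_def by (auto simp: PiE_def extensional_def)
  ultimately show ?case unfolding eqm_def by blast
next
  case (Suc s)
  obtain k where kN: "k \<in> N" and dk: "1 \<le> \<delta> k"
  proof -
    have "\<exists>k\<in>N. \<delta> k \<noteq> 0" using Suc.hyps(2) finN by (metis sum.neutral nat.distinct(1))
    then show ?thesis using that by auto
  qed
  define \<delta>' where "\<delta>' = \<delta>(k := \<delta> k - 1)"
  have "sum \<delta>' N + \<delta> k = sum \<delta> N + (\<delta> k - 1)" unfolding \<delta>'_def using sum_upd_nat[OF finN, of \<delta> k "\<delta> k - 1"] kN by simp
  then have s': "s = sum \<delta>' N" using Suc.hyps(2) dk by simp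
  have dl': "\<forall>i\<in>N. \<delta>' i \<le> f i E" using Suc.prems unfolding \<delta>'_def by auto
  obtain x where xe: "eqm \<delta>' x" using Suc.hyps(1)[OF s' dl'] by blast
  have xP: "x \<in> PiE N (BB \<delta>')" and xo: "\<And>i. i \<in> N \<Longrightarrow> OPT \<delta>' i (oth x i) (x i)" using xe unfolding eqm_def by auto
  define l0 where "l0 e = (\<Sum>j\<in>N. x j e)" for e
  have dk': "\<delta>' k + 1 = \<delta> k" unfolding \<delta>'_def using dk by simp
  have ok: "isopt E (base_set E (f k) (\<delta>' k)) (C k) (oth x k) (x k)" using xo[OF kN] unfolding OPT_def BB_def .
  obtain e where eE: "e \<in> E"
    and a1: "isopt E (base_set E (f k) (\<delta>' k + 1)) (C k) (oth x k) ((x k)(e := x k e + 1))"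
    and a2: "1 \<le> oth x k e \<longrightarrow> isopt E (base_set E (f k) (\<delta>' k + 1)) (C k) ((oth x k)(e := oth x k e - 1)) ((x k)(e := x k e + 1))"
    using aug[OF finE rank[OF kN] regular[OF kN] ok] dk' Suc.prems kN by auto
  define z' where "z' = (x k)(e := x k e + 1)"
  define x1 where "x1 = x(k := z')"
  have BBk: "BB \<delta> k = base_set E (f k) (\<delta>' k + 1)" unfolding BB_def using dk' by simp
  have BBo: "BB \<delta> i = BB \<delta>' i" if "i \<noteq> k" for i unfolding BB_def \<delta>'_def using that by simp
  have z'B: "z' \<in> BB \<delta> k" using a1 BBk unfolding isopt_def z'_def by auto
  have x1P: "x1 \<in> PiE N (BB \<delta>)"
    using xP z'B BBo kN unfolding x1_def by (auto simp: PiE_def extensional_def Pi_def)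
  have ld1: "\<forall>e''\<in>E. (\<Sum>j\<in>N. x1 j e'') = l0 e'' + (if e'' = e then 1 else 0)"
  proof
    fix e'' assume "e'' \<in> E"
    have "(\<Sum>i\<in>N. x1 i e'') + x k e'' = (\<Sum>i\<in>N. x i e'') + z' e''" unfolding x1_def by (rule sum_upd_fun[OF kN])
    then show "(\<Sum>j\<in>N. x1 j e'') = l0 e'' + (if e'' = e then 1 else 0)" unfolding l0_def z'_def by auto
  qed
  have inv1: "Inv \<delta> x1 e"
    unfolding Inv_def
  proof
    fix l assume lN: "l \<in> N"
    show "if 1 \<le> oth x1 l e then OPT \<delta> l ((oth x1 l)(e := oth x1 l e - 1)) (x1 l) else OPT \<delta> l (oth x1 l) (x1 l)"
    proof (cases "l = k")
      case True
      have "oth x1 k = oth x k" unfolding x1_def by (rule oth_upd_self)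
      then show ?thesis using True a1 a2 BBk unfolding OPT_def x1_def z'_def by auto
    next
      case False
      have r: "oth x1 l e'' + x k e'' = oth x l e'' + z' e''" for e'' unfolding x1_def by (rule oth_upd_other[OF False kN])
      have ge: "1 \<le> oth x1 l e" using r[of e] unfolding z'_def by simp
      have feq: "(oth x1 l)(e := oth x1 l e - 1) = oth x l"
      proof
        fix e'' show "((oth x1 l)(e := oth x1 l e - 1)) e'' = oth x l e''"
          using r[of e''] unfolding z'_def by (cases "e'' = e") auto
      qed
      have "OPT \<delta> l (oth x l) (x l)" using xo[OF lN] BBo[OF False] unfolding OPT_def by simp
      then show ?thesis using ge feq False unfolding x1_def by simp
    qed
  qed
  have dl: "\<And>i. i \<in> N \<Longrightarrow> \<delta> i \<le> f i E" using Suc.prems by auto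
  show ?case by (rule cascade[OF dl eE x1P ld1 inv1])
qed

end

theorem main_result:
  fixes n m :: nat
    and f :: "nat \<Rightarrow> nat set \<Rightarrow> nat"
    and d :: "nat \<Rightarrow> nat"
    and C :: "nat \<Rightarrow> nat \<Rightarrow> nat \<Rightarrow> nat \<Rightarrow> real"
  assumes rank: "\<And>i. i \<in> {1..n} \<Longrightarrow> polymatroid_rank {1..m} (f i)"
    and demand: "\<And>i. i \<in> {1..n} \<Longrightarrow> d i \<le> f i {1..m}"
    and regular: "\<And>i e. i \<in> {1..n} \<Longrightarrow> e \<in> {1..m} \<Longrightarrow> regular_cost (C i e)"
  shows "\<exists>x. (\<forall>i\<in>{1..n}. x i \<in> base_set {1..m} (f i) (d i)) \<and>
             (\<forall>i\<in>{1..n}. \<forall>y\<in>base_set {1..m} (f i) (d i).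
                private_cost {1..n} {1..m} C x i \<le> private_cost {1..n} {1..m} C (x(i := y)) i)"
proof -
  interpret G: game "{1..n}" "{1..m}" f C
    using rank regular by unfold_locales auto
  obtain x where x: "G.eqm d x" using G.exists_eq demand by blast
  have pc: "private_cost {1..n} {1..m} C z i = cst {1..m} (C i) (G.oth z i) (z i)" for z i
    unfolding private_cost_def cst_def G.oth_def by simp
  show ?thesis
  proof (intro exI conjI ballI)
    fix i assume i: "i \<in> {1..n}"
    show "x i \<in> base_set {1..m} (f i) (d i)" using x i unfolding G.eqm_def G.BB_def by auto
    fix y assume y: "y \<in> base_set {1..m} (f i) (d i)"
    have "G.OPT d i (G.oth x i) (x i)" using x i unfolding G.eqm_def by auto
    then have "cst {1..m} (C i) (G.oth x i) (x i) \<le> cst {1..m} (C i) (G.oth x i) y"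
      using y unfolding G.OPT_def isopt_def G.BB_def by auto
    then show "private_cost {1..n} {1..m} C x i \<le> private_cost {1..n} {1..m} C (x(i := y)) i"
      unfolding pc G.oth_upd_self by simp
  qed
qed

theorem theorem5p1:
  fixes n m :: nat
    and f :: "nat \<Rightarrow> nat set \<Rightarrow> nat"
    and d :: "nat \<Rightarrow> nat"
    and C :: "nat \<Rightarrow> nat \<Rightarrow> nat \<Rightarrow> nat \<Rightarrow> real"
  assumes rank: "\<And>i. i \<in> {1..n} \<Longrightarrow> polymatroid_rank {1..m} (f i)"
    and demand: "\<And>i. i \<in> {1..n} \<Longrightarrow> d i \<le> f i {1..m}"
    and nonneg: "\<And>i e a t. i \<in> {1..n} \<Longrightarrow> e \<in> {1..m} \<Longrightarrow> C i e a t \<ge> 0"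
    and regular: "\<And>i e. i \<in> {1..n} \<Longrightarrow> e \<in> {1..m} \<Longrightarrow> regular_cost (C i e)"
  shows "\<exists>x. (\<forall>i\<in>{1..n}. x i \<in> base_set {1..m} (f i) (d i)) \<and>
             (\<forall>i\<in>{1..n}. \<forall>y\<in>base_set {1..m} (f i) (d i).
                private_cost {1..n} {1..m} C x i \<le> private_cost {1..n} {1..m} C (x(i := y)) i)"
    using main_result[of n m f d C] rank demand regular by blast

end
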